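(* For every even $n\ge0$, every integer $r\ge0$ and every graph $G$ of order $n$, the degree $d(G)$ is a non-negative integer, and there is a constant $C$ independent of $p$ such that $\mathcal A_r(G)\le C\,N^{-d(G)}$ for all $p\in(0,1)$; i.e. at fixed order $n$ the amplitude scales at most like $N^{-d(G)}$ as $N\to\infty$.
   Context: Fix $p\in(0,1)$ and $N:=1/(1-p)$. Trees. A 2-rooted ternary tree of order $n$ is a finite plane tree $U$ with a root vertex of degree 2 and $n$ true vertices of degree 4; each edge is internal or a leaf (half-edge). Each true vertex $v$ has parent edge $e_1(v)$ (towards the root) and ordered children edges $e_2(v),e_3(v),e_4(v)$. One root edge has type $\alpha$, the other $\bar\alpha$; if $e_1(v)$ has type $\tau$ then $e_2(v)$ has the other type and $e_3(v),e_4(v)$ have type $\tau$. Leaves of type $\alpha$ are leaves, of type $\bar\alpha$ anti-leaves ($n+1$ each). A heap-ordering labels true vertices bijectively by $\{1,\dots,n\}$, increasing from parent to child. Graphs. For even $n$, a graph of order $n$ is $G=(U,w,w')$: $U$ heap-ordered; $w$ a bijection leaves $\to$ anti-leaves (dashed edges; internal edges are solid); $w'$ a partition of true vertices into $n/2$ pairs (wavy edges) with, for each pair $\{v,v'\}$ ($v$ of smaller label), one of eight propagators in $(S,j,k)=(S_v,j_v,k_v)$, $(S',j',k')=(S_{v'},j_{v'},k_{v'})$: $\delta_{jj'}\delta_{kk'}$, $\delta_{j,S-j'}\delta_{kk'}$, $\delta_{jj'}\delta_{k,S-k'}$, $\delta_{j,S-j'}\delta_{k,S-k'}$, $\delta_{jk'}\delta_{kj'}$,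 $\delta_{j,S-k'}\delta_{kj'}$, $\delta_{jk'}\delta_{k,S-j'}$, $\delta_{j,S-k'}\delta_{k,S-j'}$, together with $S=S'$. Amplitude. A momentum attribution gives each true vertex $S_v\ge0$, $0\le j_v,k_v\le S_v$ and momenta $j_v,S_v-j_v,k_v,S_v-k_v$ to the ends at $v$ of $e_1,\dots,e_4$. For $r\in\mathbb N$ it is admissible if solid edges get equal momenta at both ends, both root edges carry momentum $r$, every dashed edge $e$ joins leaves of equal momentum $m(e)$, and every wavy edge satisfies $S_v=S_{v'}$ and its propagator. $\mathcal A_r(G):=N^{-n}\sum_{\text{admissible}}\prod_{e\text{ dashed}}p^{m(e)}$. Faces and degree. Call the edge-ends at true vertices and at the root slots ($2n+2$ slots). Each propagator of a wavy edge $\{v,v'\}$, together with $S=S'$, identifies each of $j,S-j,k,S-k$ of $v$ with one momentum of $v'$, hence pairs each slot of $v$ with a slot of $v'$; these four pairs are the corners of that wavy edge ($2n$ corners in all). Let $\Gamma$ be the graph on the set of slots whose edges are the solid and dashed edges of $G$, the corners, and one extra edge joining the two root slots; every slot has degree 2, and the connected components (cycles) of $\Gamma$ are the faces; $F(G)$ is their number. Let $E$ be the $(n/2)\times F(G)$ matrix with rows indexed by wavy edges $\omega=\{v,v'\}$ ($v$ of smaller label) and columns by faces, with $E_{\omega f}$ = (number of corners of $\omega$ lying in $f$ that contain $e_1(v)$ or $e_2(v)$) minus (number of corners of $\omega$ lying in $f$ that contain $e_3(v)$ or $e_4(v)$). Let $R(G)$ be the rank of $E$ ($0$ if $n=0$).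 The degree is $d(G):=n-F(G)+R(G)+1$. *)

theory Defs
  imports "HOL-Analysis.Analysis"
begin

text \<open>RS True is the root slot of the root edge of type alpha, RS False that of type
  alpha-bar.  VS v i is the end at true vertex v (labels 1..n, i.e. the heap ordering)
  of the edge e_i(v), i = 1..4.  Types are booleans: True = alpha, False = alpha-bar.\<close>

datatype slot = RS bool | VS nat nat

record graph =
  gorder :: nat                 \<comment> \<open>order n = number of true vertices\<close>
  par   :: "nat \<Rightarrow> slot"       \<comment> \<open>slot (at the root or at a parent vertex) of the other end of e_1(v)\<close>
  tau   :: "nat \<Rightarrow> bool"       \<comment> \<open>type of e_1(v)\<close>
  dw    :: "slot \<Rightarrow> slot"      \<comment> \<open>dashed edges: bijection leaves -> anti-leaves\<close>
  wp    :: "nat \<Rightarrow> nat"        \<comment> \<open>wavy edges: partner of v\<close>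
  pc    :: "nat \<Rightarrow> nat"        \<comment> \<open>propagator code 0..7 of the wavy edge whose smaller vertex is v\<close>

definition vertices :: "graph \<Rightarrow> nat set" where
  "vertices G = {1..gorder G}"

definition all_slots :: "graph \<Rightarrow> slot set" where
  "all_slots G = range RS \<union> {VS v i | v i. v \<in> vertices G \<and> i \<in> {1..4}}"

text \<open>Slots that may carry the upper end of an edge (root slots and child slots).\<close>
definition child_slots :: "graph \<Rightarrow> slot set" where
  "child_slots G = range RS \<union> {VS v i | v i. v \<in> vertices G \<and> i \<in> {2..4}}"

fun slot_type :: "graph \<Rightarrow> slot \<Rightarrow> bool" where
  "slot_type G (RS b) = b"
| "slot_type G (VS v i) = (if i = 2 then \<not> tau G v else tau G v)"

text \<open>Half-edges (leaves in the broad sense): child/root slots not joined to any vertex.\<close>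
definition half_slots :: "graph \<Rightarrow> slot set" where
  "half_slots G = child_slots G - par G ` vertices G"

definition leaves :: "graph \<Rightarrow> slot set" where
  "leaves G = {s \<in> half_slots G. slot_type G s}"

definition antileaves :: "graph \<Rightarrow> slot set" where
  "antileaves G = {s \<in> half_slots G. \<not> slot_type G s}"

fun propag :: "nat \<Rightarrow> nat \<times> nat \<times> nat \<Rightarrow> nat \<times> nat \<times> nat \<Rightarrow> bool" where
  "propag c (S, j, k) (S', j', k') =
     (S = S' \<and>
      (if c = 0 then j = j' \<and> k = k'
       else if c = 1 then j = S - j' \<and> k = k'
       else if c = 2 then j = j' \<and> k = S - k'
       else if c = 3 then j = S - j' \<and> k = S - k'
       else if c = 4 then j = k' \<and> k = j'
       else if c = 5 then j = S - k' \<and> k = j'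
       else if c = 6 then j = k' \<and> k = S - j'
       else j = S - k' \<and> k = S - j'))"

text \<open>Slot pairing (corners) induced by propagator c: slot i of v (momenta
  1:j, 2:S-j, 3:k, 4:S-k) is identified with slot corner_perm c i of v'.\<close>
fun partner_idx :: "nat \<Rightarrow> nat" where
  "partner_idx i = (if i = 1 then 2 else if i = 2 then 1 else if i = 3 then 4 else 3)"

definition sig1 :: "nat \<Rightarrow> nat" where
  "sig1 c = (if c = 0 then 1 else if c = 1 then 2 else if c = 2 then 1 else if c = 3 then 2
             else if c = 4 then 3 else if c = 5 then 4 else if c = 6 then 3 else 4)"

definition sig3 :: "nat \<Rightarrow> nat" where
  "sig3 c = (if c = 0 then 3 else if c = 1 then 3 else if c = 2 then 4 else if c = 3 then 4
             else if c = 4 then 1 else if c = 5 then 1 else if c = 6 then 2 else 2)"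

definition corner_perm :: "nat \<Rightarrow> nat \<Rightarrow> nat" where
  "corner_perm c i = (if i = 1 then sig1 c else if i = 2 then partner_idx (sig1 c)
                      else if i = 3 then sig3 c else partner_idx (sig3 c))"

definition wf_graph :: "graph \<Rightarrow> bool" where
  "wf_graph G \<longleftrightarrow>
     even (gorder G) \<and>
     \<comment> \<open>heap-ordered 2-rooted ternary tree\<close>
     (\<forall>v\<in>vertices G. par G v \<in> child_slots G) \<and>
     inj_on (par G) (vertices G) \<and>
     (\<forall>v\<in>vertices G. \<forall>u i. par G v = VS u i \<longrightarrow> u < v) \<and>
     (\<forall>v\<in>vertices G. tau G v = slot_type G (par G v)) \<and>
     \<comment> \<open>dashed edges\<close>
     bij_betw (dw G) (leaves G) (antileaves G) \<and>
     \<comment> \<open>wavy edges: a perfect matching of the true vertices with propagators\<close>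
     (\<forall>v\<in>vertices G. wp G v \<in> vertices G \<and> wp G v \<noteq> v \<and> wp G (wp G v) = v) \<and>
     (\<forall>v\<in>vertices G. v < wp G v \<longrightarrow> pc G v < 8)"

type_synonym attribution = "(nat \<Rightarrow> nat) \<times> (nat \<Rightarrow> nat) \<times> (nat \<Rightarrow> nat)"

fun mom :: "nat \<Rightarrow> attribution \<Rightarrow> slot \<Rightarrow> nat" where
  "mom r a (RS b) = r"
| "mom r (S, j, k) (VS v i) =
     (if i = 1 then j v else if i = 2 then S v - j v else if i = 3 then k v else S v - k v)"

text \<open>Admissible momentum attributions (values are normalised to 0 off the vertex set so
  that each attribution is counted once).  The momentum at the root slots is r, so the
  solid-edge condition at a root edge expresses that it carries momentum r.\<close>
definition admissible :: "graph \<Rightarrow> nat \<Rightarrow> attribution set" where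
  "admissible G r = {(S, j, k).
     (\<forall>v. v \<notin> vertices G \<longrightarrow> S v = 0 \<and> j v = 0 \<and> k v = 0) \<and>
     (\<forall>v\<in>vertices G. j v \<le> S v \<and> k v \<le> S v) \<and>
     (\<forall>v\<in>vertices G. mom r (S, j, k) (par G v) = mom r (S, j, k) (VS v 1)) \<and>
     (\<forall>l\<in>leaves G. mom r (S, j, k) l = mom r (S, j, k) (dw G l)) \<and>
     (\<forall>v\<in>vertices G. v < wp G v \<longrightarrow>
        S v = S (wp G v) \<and>
        propag (pc G v) (S v, j v, k v) (S (wp G v), j (wp G v), k (wp G v)))}"

definition NN :: "real \<Rightarrow> real" where
  "NN p = 1 / (1 - p)"

text \<open>Amplitude, as a sum of non-negative terms in [0, infinity].  Dashed edges are in
  bijection with leaves, and m(e) is the momentum of the leaf.\<close>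
definition amplitude :: "real \<Rightarrow> nat \<Rightarrow> graph \<Rightarrow> ennreal" where
  "amplitude p r G =
     ennreal (NN p powr (- real (gorder G))) *
     (\<Sum>\<^sub>\<infinity>a\<in>admissible G r. ennreal (\<Prod>l\<in>leaves G. p ^ mom r a l))"

definition gamma_adj :: "graph \<Rightarrow> slot \<Rightarrow> slot \<Rightarrow> bool" where
  "gamma_adj G s t \<longleftrightarrow>
     (\<exists>v\<in>vertices G. {s, t} = {par G v, VS v 1}) \<or>
     (\<exists>l\<in>leaves G. {s, t} = {l, dw G l}) \<or>
     (\<exists>v\<in>vertices G. v < wp G v \<and>
        (\<exists>i\<in>{1..4}. {s, t} = {VS v i, VS (wp G v) (corner_perm (pc G v) i)})) \<or>
     {s, t} = {RS True, RS False}"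

definition faces :: "graph \<Rightarrow> slot set set" where
  "faces G = all_slots G // ({(s, t). gamma_adj G s t}\<^sup>*)"

definition nfaces :: "graph \<Rightarrow> nat" where
  "nfaces G = card (faces G)"

text \<open>Rows of E are indexed by the smaller vertex v of each wavy edge.\<close>
definition wavy_rows :: "graph \<Rightarrow> nat set" where
  "wavy_rows G = {v \<in> vertices G. v < wp G v}"

definition Emat :: "graph \<Rightarrow> nat \<Rightarrow> slot set \<Rightarrow> real" where
  "Emat G v f = real (card {i \<in> {1, 2::nat}. VS v i \<in> f}) - real (card {i \<in> {3, 4::nat}. VS v i \<in> f})"

definition lin_indep_rows :: "('r \<Rightarrow> 'c \<Rightarrow> real) \<Rightarrow> 'c set \<Rightarrow> 'r set \<Rightarrow> bool" where
  "lin_indep_rows M J S \<longleftrightarrow>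
     (\<forall>c :: 'r \<Rightarrow> real. (\<forall>f\<in>J. (\<Sum>v\<in>S. c v * M v f) = 0) \<longrightarrow> (\<forall>v\<in>S. c v = 0))"

definition mat_rank :: "('r \<Rightarrow> 'c \<Rightarrow> real) \<Rightarrow> 'r set \<Rightarrow> 'c set \<Rightarrow> nat" where
  "mat_rank M I J = Max {card S | S. S \<subseteq> I \<and> lin_indep_rows M J S}"

definition rankE :: "graph \<Rightarrow> nat" where
  "rankE G = mat_rank (Emat G) (wavy_rows G) (faces G)"

definition gdegree :: "graph \<Rightarrow> int" where
  "gdegree G = int (gorder G) - int (nfaces G) + int (rankE G) + 1"

end

theory Submission
  imports Defs
begin

lemma indepD:
  assumes "lin_indep_rows M J S" "\<forall>f\<in>J. (\<Sum>v\<in>S. c v * M v f) = 0" "v \<in> S"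
  shows "c v = 0"
  using assms unfolding lin_indep_rows_def by blast

lemma elim_lemma:
  fixes M :: "'r \<Rightarrow> 'c \<Rightarrow> real"
  assumes "finite I" "finite J" "lin_indep_rows M J I"
  shows "\<exists>P \<subseteq> J. card P = card I \<and>
   (\<forall>m m'. (\<forall>i\<in>I. (\<Sum>f\<in>J. M i f * m f) = (\<Sum>f\<in>J. M i f * m' f)) \<and> (\<forall>f\<in>J-P. m f = m' f)
       \<longrightarrow> (\<forall>f\<in>P. m f = m' f)) \<and>
   (\<forall>x. \<exists>m. (\<forall>i\<in>I. (\<Sum>f\<in>J. M i f * m f) = 0) \<and> (\<forall>f\<in>J-P. m f = x f))"
  using assms
proof (induction I arbitrary: M J rule: finite_induct)
  case empty
  show ?case by (rule exI[of _ "{}"]) auto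
next
  case (insert i0 I0)
  have "\<exists>f0\<in>J. M i0 f0 \<noteq> 0"
  proof (rule ccontr)
    assume "\<not> ?thesis"
    hence "\<forall>f\<in>J. (\<Sum>v\<in>insert i0 I0. (if v = i0 then 1 else 0) * M v f) = 0"
      using insert.hyps by (auto intro!: sum.neutral)
    from indepD[OF insert.prems(2) this, of i0]
    have "(if i0 = i0 then 1 else 0::real) = 0" by simp
    thus False by simp
  qed
  then obtain f0 where f0: "f0 \<in> J" "M i0 f0 \<noteq> 0" by blast
  define \<alpha> where "\<alpha> i = M i f0 / M i0 f0" for i
  define M' where "M' i f = M i f - \<alpha> i * M i0 f" for i f
  have M'f0: "M' i f0 = 0" for i using f0(2) by (simp add: M'_def \<alpha>_def)
  have sumM': "(\<Sum>f\<in>J - {f0}. M' i f * m f) = (\<Sum>f\<in>J. M i f * m f) - \<alpha> i * (\<Sum>f\<in>J. M i0 f * m f)" for i m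
  proof -
    have "(\<Sum>f\<in>J - {f0}. M' i f * m f) = (\<Sum>f\<in>J. M' i f * m f)"
      using f0 insert.prems(1) by (simp add: sum_diff1 M'f0)
    also have "\<dots> = (\<Sum>f\<in>J. M i f * m f) - \<alpha> i * (\<Sum>f\<in>J. M i0 f * m f)"
      by (simp add: M'_def algebra_simps sum_subtractf sum_distrib_left)
    finally show ?thesis .
  qed
  have ind': "lin_indep_rows M' (J - {f0}) I0"
    unfolding lin_indep_rows_def
  proof (intro allI impI)
    fix c assume hc: "\<forall>f\<in>J - {f0}. (\<Sum>v\<in>I0. c v * M' v f) = 0"
    have hc2: "\<forall>f\<in>J. (\<Sum>v\<in>I0. c v * M' v f) = 0"
      using hc by (auto simp: M'f0)
    define c' where "c' v = (if v = i0 then - (\<Sum>i\<in>I0. c i * \<alpha> i) else c v)" for v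
    have "\<forall>f\<in>J. (\<Sum>v\<in>insert i0 I0. c' v * M v f) = 0"
    proof
      fix f assume "f \<in> J"
      have "(\<Sum>v\<in>insert i0 I0. c' v * M v f) = c' i0 * M i0 f + (\<Sum>v\<in>I0. c v * M v f)"
      proof -
        have "(\<Sum>v\<in>I0. c' v * M v f) = (\<Sum>v\<in>I0. c v * M v f)"
          using insert.hyps(2) by (intro sum.cong) (auto simp: c'_def)
        thus ?thesis using insert.hyps by simp
      qed
      also have "\<dots> = (\<Sum>v\<in>I0. c v * M' v f)"
      proof -
        have "(\<Sum>v\<in>I0. c v * M' v f) = (\<Sum>v\<in>I0. c v * M v f - (c v * \<alpha> v) * M i0 f)"
          by (intro sum.cong) (auto simp: M'_def algebra_simps)
        also have "\<dots> = (\<Sum>v\<in>I0. c v * M v f) - (\<Sum>v\<in>I0. c v * \<alpha> v) * M i0 f"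
          by (simp add: sum_subtractf sum_distrib_right)
        finally show ?thesis by (simp add: c'_def)
      qed
      finally show "(\<Sum>v\<in>insert i0 I0. c' v * M v f) = 0" using hc2 \<open>f \<in> J\<close> by simp
    qed
    from indepD[OF insert.prems(2) this]
    have z: "\<forall>v\<in>insert i0 I0. c' v = 0" by blast
    show "\<forall>v\<in>I0. c v = 0"
    proof
      fix v assume v: "v \<in> I0"
      hence "v \<noteq> i0" using insert.hyps by auto
      hence "c' v = c v" by (simp add: c'_def)
      thus "c v = 0" using z v by simp
    qed
  qed
  have fJ': "finite (J - {f0})" using insert.prems(1) by simp
  from insert.IH[OF fJ' ind'] obtain P' where
    P'1: "P' \<subseteq> J - {f0}" and rest: "card P' = card I0 \<and>
   (\<forall>m m'. (\<forall>i\<in>I0. (\<Sum>f\<in>J - {f0}. M' i f * m f) = (\<Sum>f\<in>J - {f0}. M' i f * m' f)) \<and> (\<forall>f\<in>J - {f0} - P'. m f = m' f)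
       \<longrightarrow> (\<forall>f\<in>P'. m f = m' f)) \<and>
   (\<forall>x. \<exists>m. (\<forall>i\<in>I0. (\<Sum>f\<in>J - {f0}. M' i f * m f) = 0) \<and> (\<forall>f\<in>J - {f0} - P'. m f = x f))"
    by (elim bexE conjE exE) (rule that, assumption, blast)
  have P': "P' \<subseteq> J - {f0}" "card P' = card I0" using P'1 rest by auto
  have inj': "\<And>m m'. (\<forall>i\<in>I0. (\<Sum>f\<in>J - {f0}. M' i f * m f) = (\<Sum>f\<in>J - {f0}. M' i f * m' f)) \<Longrightarrow>
        (\<forall>f\<in>J - {f0} - P'. m f = m' f) \<Longrightarrow> (\<forall>f\<in>P'. m f = m' f)"
    using rest by blast
  have surj': "\<And>x. \<exists>m. (\<forall>i\<in>I0. (\<Sum>f\<in>J - {f0}. M' i f * m f) = 0) \<and> (\<forall>f\<in>J - {f0} - P'. m f = x f)"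
    using rest by blast
  define P where "P = insert f0 P'"
  have fin': "finite P'" using P'(1) insert.prems(1) finite_subset by blast
  have "P \<subseteq> J" using P' f0 by (auto simp: P_def)
  moreover have "card P = card (insert i0 I0)"
  proof -
    have "f0 \<notin> P'" using P' by auto
    thus ?thesis using P' fin' insert.hyps by (simp add: P_def)
  qed
  moreover have "\<forall>m m'. (\<forall>i\<in>insert i0 I0. (\<Sum>f\<in>J. M i f * m f) = (\<Sum>f\<in>J. M i f * m' f)) \<and> (\<forall>f\<in>J-P. m f = m' f)
       \<longrightarrow> (\<forall>f\<in>P. m f = m' f)"
  proof (intro allI impI)
    fix m m' assume h: "(\<forall>i\<in>insert i0 I0. (\<Sum>f\<in>J. M i f * m f) = (\<Sum>f\<in>J. M i f * m' f)) \<and> (\<forall>f\<in>J-P. m f = m' f)"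
    have "\<forall>f\<in>P'. m f = m' f"
      apply (rule inj')
      using h by (auto simp: sumM' P_def)
    hence agree: "\<forall>f\<in>J - {f0}. m f = m' f" using h by (auto simp: P_def)
    have e0: "(\<Sum>f\<in>J. M i0 f * m f) = (\<Sum>f\<in>J. M i0 f * m' f)" using h by auto
    have "(\<Sum>f\<in>J. M i0 f * m f) = M i0 f0 * m f0 + (\<Sum>f\<in>J - {f0}. M i0 f * m f)"
      using f0 insert.prems(1) by (simp add: sum.remove)
    moreover have "(\<Sum>f\<in>J. M i0 f * m' f) = M i0 f0 * m' f0 + (\<Sum>f\<in>J - {f0}. M i0 f * m' f)"
      using f0 insert.prems(1) by (simp add: sum.remove)
    moreover have "(\<Sum>f\<in>J - {f0}. M i0 f * m f) = (\<Sum>f\<in>J - {f0}. M i0 f * m' f)"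
      using agree by (intro sum.cong) auto
    ultimately have "m f0 = m' f0" using e0 f0(2) by simp
    with agree show "\<forall>f\<in>P. m f = m' f" using \<open>P \<subseteq> J\<close> by (auto simp: P_def)
  qed
  moreover have "\<forall>x. \<exists>m. (\<forall>i\<in>insert i0 I0. (\<Sum>f\<in>J. M i f * m f) = 0) \<and> (\<forall>f\<in>J-P. m f = x f)"
  proof
    fix x
    obtain m0 where m0: "\<forall>i\<in>I0. (\<Sum>f\<in>J - {f0}. M' i f * m0 f) = 0" "\<forall>f\<in>J - {f0} - P'. m0 f = x f"
      using surj' by blast
    define m where "m = m0(f0 := - (\<Sum>f\<in>J - {f0}. M i0 f * m0 f) / M i0 f0)"
    have r0: "(\<Sum>f\<in>J. M i0 f * m f) = 0"
    proof -
      have "(\<Sum>f\<in>J. M i0 f * m f) = M i0 f0 * m f0 + (\<Sum>f\<in>J - {f0}. M i0 f * m f)"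
        using f0 insert.prems(1) by (simp add: sum.remove)
      also have "(\<Sum>f\<in>J - {f0}. M i0 f * m f) = (\<Sum>f\<in>J - {f0}. M i0 f * m0 f)"
        by (intro sum.cong) (auto simp: m_def)
      finally show ?thesis using f0(2) by (simp add: m_def)
    qed
    have "\<forall>i\<in>I0. (\<Sum>f\<in>J. M i f * m f) = 0"
    proof
      fix i assume "i \<in> I0"
      have "(\<Sum>f\<in>J - {f0}. M' i f * m f) = (\<Sum>f\<in>J - {f0}. M' i f * m0 f)"
        by (intro sum.cong) (auto simp: m_def)
      hence "(\<Sum>f\<in>J. M i f * m f) - \<alpha> i * (\<Sum>f\<in>J. M i0 f * m f) = 0"
        using sumM'[of i m] m0(1) \<open>i \<in> I0\<close> by simp
      thus "(\<Sum>f\<in>J. M i f * m f) = 0" using r0 by simp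
    qed
    moreover have "\<forall>f\<in>J-P. m f = x f" using m0(2) by (auto simp: m_def P_def)
    ultimately show "\<exists>m. (\<forall>i\<in>insert i0 I0. (\<Sum>f\<in>J. M i f * m f) = 0) \<and> (\<forall>f\<in>J-P. m f = x f)"
      using r0 by blast
  qed
  ultimately show ?case by blast
qed

lemma corner_mom:
  assumes "propag c (S v, j v, k v) (S w, j w, k w)" "j v \<le> S v" "k v \<le> S v" "j w \<le> S w" "k w \<le> S w"
    "i \<in> {1..4}"
  shows "mom r (S,j,k) (VS v i) = mom r (S,j,k) (VS w (corner_perm c i))"
proof -
  have "i = 1 \<or> i = 2 \<or> i = 3 \<or> i = 4" using assms(6) by auto
  moreover have "c = 0 \<or> c = 1 \<or> c = 2 \<or> c = 3 \<or> c = 4 \<or> c = 5 \<or> c = 6 \<or> c \<ge> 7" by auto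
  ultimately show ?thesis using assms(1-5)
    by (elim disjE) (auto simp: corner_perm_def sig1_def sig3_def)
qed

lemma corner_surj:
  assumes "i' \<in> {1..4::nat}"
  shows "\<exists>i\<in>{1..4}. corner_perm c i = i'"
proof -
  have "i' = 1 \<or> i' = 2 \<or> i' = 3 \<or> i' = 4" using assms by auto
  moreover have "c = 0 \<or> c = 1 \<or> c = 2 \<or> c = 3 \<or> c = 4 \<or> c = 5 \<or> c = 6 \<or> c \<ge> 7" by auto
  moreover have e: "{1..4::nat} = {1,2,3,4}" by auto
  ultimately show ?thesis
    by (elim disjE) (simp_all add: corner_perm_def sig1_def sig3_def)
qed

lemma corner_range: "corner_perm c i \<in> {1..4}"
  by (auto simp: corner_perm_def sig1_def sig3_def)

locale wfg =
  fixes G :: graph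
  assumes wf: "wf_graph G"
begin

lemma par_child: "v \<in> vertices G \<Longrightarrow> par G v \<in> child_slots G"
  using wf by (simp add: wf_graph_def)
lemma par_inj: "inj_on (par G) (vertices G)"
  using wf by (simp add: wf_graph_def)
lemma heap: "v \<in> vertices G \<Longrightarrow> par G v = VS u i \<Longrightarrow> u < v"
  using wf by (auto simp: wf_graph_def)
lemma dw_bij: "bij_betw (dw G) (leaves G) (antileaves G)"
  using wf by (simp add: wf_graph_def)
lemma wp_props: "v \<in> vertices G \<Longrightarrow> wp G v \<in> vertices G \<and> wp G v \<noteq> v \<and> wp G (wp G v) = v"
  using wf by (simp add: wf_graph_def)
lemma even_n: "even (gorder G)"
  using wf by (simp add: wf_graph_def)

lemma fin_vertices: "finite (vertices G)"
  by (simp add: vertices_def)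

lemma fin_all_slots: "finite (all_slots G)"
proof -
  have "finite {VS v i | v i. v \<in> vertices G \<and> i \<in> {1..4::nat}}"
  proof -
    have "{VS v i | v i. v \<in> vertices G \<and> i \<in> {1..4::nat}} = (\<lambda>(v,i). VS v i) ` (vertices G \<times> {1..4})"
      by auto
    thus ?thesis using fin_vertices by simp
  qed
  thus ?thesis by (simp add: all_slots_def)
qed

lemma child_sub: "child_slots G \<subseteq> all_slots G"
  by (auto simp: child_slots_def all_slots_def)

lemma leaves_sub: "leaves G \<subseteq> all_slots G"
  using child_sub by (auto simp: leaves_def half_slots_def)

lemma fin_leaves: "finite (leaves G)"
  using leaves_sub fin_all_slots finite_subset by blast

lemma VS_all: "v \<in> vertices G \<Longrightarrow> i \<in> {1..4} \<Longrightarrow> VS v i \<in> all_slots G"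
  by (auto simp: all_slots_def)

lemma VS_child: "v \<in> vertices G \<Longrightarrow> i \<in> {2..4} \<Longrightarrow> VS v i \<in> child_slots G"
  by (auto simp: child_slots_def)

lemma RS_child: "RS b \<in> child_slots G"
  by (auto simp: child_slots_def)

lemma all_slots_cases:
  assumes "s \<in> all_slots G"
  obtains b where "s = RS b" | v i where "s = VS v i" "v \<in> vertices G" "i \<in> {1..4}"
  using assms by (auto simp: all_slots_def)

lemma child_slots_cases:
  assumes "s \<in> child_slots G"
  obtains b where "s = RS b" | v i where "s = VS v i" "v \<in> vertices G" "i \<in> {2..4}"
  using assms by (auto simp: child_slots_def)

definition grel :: "(slot \<times> slot) set" where
  "grel = {(s, t). gamma_adj G s t}\<^sup>*"

definition cls :: "slot \<Rightarrow> slot set" where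
  "cls s = grel `` {s}"

lemma gamma_sym: "gamma_adj G s t \<Longrightarrow> gamma_adj G t s"
proof -
  have e: "{t, s} = {s, t}" by blast
  assume "gamma_adj G s t"
  thus ?thesis unfolding gamma_adj_def by (simp only: e)
qed

lemma grel_sym: "(s, t) \<in> grel \<Longrightarrow> (t, s) \<in> grel"
proof -
  have "sym {(s, t). gamma_adj G s t}" using gamma_sym by (auto simp: sym_def)
  hence "sym grel" unfolding grel_def by (rule sym_rtrancl)
  thus "(s, t) \<in> grel \<Longrightarrow> (t, s) \<in> grel" by (auto simp: sym_def)
qed

lemma grel_trans: "(s, t) \<in> grel \<Longrightarrow> (t, u) \<in> grel \<Longrightarrow> (s, u) \<in> grel"
  unfolding grel_def by (rule rtrancl_trans)

lemma grel_adj: "gamma_adj G s t \<Longrightarrow> (s, t) \<in> grel"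
  unfolding grel_def by auto

lemma cls_eq: "(s, t) \<in> grel \<Longrightarrow> cls s = cls t"
  unfolding cls_def using grel_sym grel_trans by blast

lemma cls_adj: "gamma_adj G s t \<Longrightarrow> cls s = cls t"
  using cls_eq grel_adj by blast

lemma in_cls: "s \<in> cls s"
  unfolding cls_def grel_def by auto

lemma faces_eq: "faces G = cls ` all_slots G"
  unfolding faces_def quotient_def cls_def grel_def by auto

lemma fin_faces: "finite (faces G)"
  using fin_all_slots by (simp add: faces_eq)

lemma cls_face: "s \<in> all_slots G \<Longrightarrow> cls s \<in> faces G"
  by (simp add: faces_eq)

lemma mem_face: "f \<in> faces G \<Longrightarrow> s \<in> f \<Longrightarrow> f = cls s"
  unfolding faces_eq cls_def using cls_eq cls_def by auto

lemma face_iff: "f \<in> faces G \<Longrightarrow> s \<in> f \<longleftrightarrow> f = cls s"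
  using mem_face in_cls by blast

definition froot :: "slot set" where "froot = cls (RS True)"

lemma froot_face: "froot \<in> faces G"
  unfolding froot_def by (rule cls_face) (auto simp: all_slots_def)

lemma cls_RS: "cls (RS b) = froot"
proof -
  have "gamma_adj G (RS True) (RS False)" by (auto simp: gamma_adj_def)
  hence "cls (RS True) = cls (RS False)" by (rule cls_adj)
  thus ?thesis by (cases b) (auto simp: froot_def)
qed

lemma card12: "real (card {i \<in> {a, b::nat}. P i}) = of_bool (P a) + of_bool (P b)" if "a \<noteq> b"
proof -
  have "{i \<in> {a, b}. P i} = (if P a then {a} else {}) \<union> (if P b then {b} else {})" by auto
  thus ?thesis using that by (auto simp: card_insert_if)
qed

lemma Emat_face:
  assumes "f \<in> faces G"
  shows "Emat G v f = of_bool (f = cls (VS v 1)) + of_bool (f = cls (VS v 2))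
           - of_bool (f = cls (VS v 3)) - of_bool (f = cls (VS v 4))"
proof -
  have a: "real (card {i \<in> {1, 2::nat}. VS v i \<in> f}) = of_bool (VS v 1 \<in> f) + of_bool (VS v 2 \<in> f)"
    by (rule card12) simp
  have b: "real (card {i \<in> {3, 4::nat}. VS v i \<in> f}) = of_bool (VS v 3 \<in> f) + of_bool (VS v 4 \<in> f)"
    by (rule card12) simp
  show ?thesis unfolding Emat_def a b unfolding face_iff[OF assms] by linarith
qed

lemma sum_delta_face:
  assumes "s \<in> all_slots G"
  shows "(\<Sum>f\<in>faces G. of_bool (f = cls s) * m f) = (m (cls s) :: real)"
proof -
  have "(\<Sum>f\<in>faces G. of_bool (f = cls s) * m f) = (\<Sum>f\<in>faces G. if f = cls s then m f else 0)"
    by (intro sum.cong refl) simp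
  also have "\<dots> = m (cls s)" using cls_face[OF assms] fin_faces by (simp add: sum.delta')
  finally show ?thesis .
qed

lemma Emat_sum:
  assumes "v \<in> vertices G"
  shows "(\<Sum>f\<in>faces G. Emat G v f * m f) =
     (m (cls (VS v 1)) :: real) + m (cls (VS v 2)) - m (cls (VS v 3)) - m (cls (VS v 4))"
proof -
  have "(\<Sum>f\<in>faces G. Emat G v f * m f) =
     (\<Sum>f\<in>faces G. of_bool (f = cls (VS v 1)) * m f + of_bool (f = cls (VS v 2)) * m f
        - of_bool (f = cls (VS v 3)) * m f - of_bool (f = cls (VS v 4)) * m f)"
    by (intro sum.cong refl) (simp add: Emat_face left_diff_distrib distrib_right)
  also have "\<dots> = m (cls (VS v 1)) + m (cls (VS v 2)) - m (cls (VS v 3)) - m (cls (VS v 4))"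
    by (simp only: sum_subtractf sum.distrib) (simp add: sum_delta_face VS_all assms)
  finally show ?thesis .
qed

lemma Emat_rowsum:
  assumes "v \<in> vertices G"
  shows "(\<Sum>f\<in>faces G. Emat G v f) = 0"
  using Emat_sum[OF assms, of "\<lambda>_. 1"] by simp

end

lemma span_kernel:
  fixes M :: "'r \<Rightarrow> 'c \<Rightarrow> real"
  assumes "finite J" "finite W" "I \<subseteq> W" "lin_indep_rows M J I"
    "\<forall>w\<in>W - I. \<not> lin_indep_rows M J (insert w I)"
    "\<forall>i\<in>I. (\<Sum>f\<in>J. M i f * m f) = 0" "w \<in> W"
  shows "(\<Sum>f\<in>J. M w f * m f) = 0"
proof (cases "w \<in> I")
  case True thus ?thesis using assms by blast
next
  case False
  have finI: "finite I" using assms(2,3) finite_subset by blast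
  from assms(5) False assms(7) obtain c where
    c: "\<forall>f\<in>J. (\<Sum>v\<in>insert w I. c v * M v f) = 0" and nz: "\<exists>v\<in>insert w I. c v \<noteq> 0"
    unfolding lin_indep_rows_def by blast
  have split: "(\<Sum>v\<in>insert w I. c v * M v f) = c w * M w f + (\<Sum>v\<in>I. c v * M v f)" for f
    using False finI by simp
  have cw: "c w \<noteq> 0"
  proof
    assume "c w = 0"
    hence "\<forall>f\<in>J. (\<Sum>v\<in>I. c v * M v f) = 0" using c split by simp
    hence "\<forall>v\<in>I. c v = 0" using assms(4) unfolding lin_indep_rows_def by blast
    with nz \<open>c w = 0\<close> show False by blast
  qed
  have row: "M w f = - (\<Sum>v\<in>I. c v * M v f) / c w" if "f \<in> J" for f
    using c that split[of f] cw by (simp add: field_simps)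
  have "(\<Sum>f\<in>J. M w f * m f) = (\<Sum>f\<in>J. - (\<Sum>v\<in>I. c v * (M v f * m f)) / c w)"
    by (intro sum.cong refl) (simp add: row sum_distrib_right mult.assoc)
  also have "\<dots> = - (\<Sum>v\<in>I. c v * (\<Sum>f\<in>J. M v f * m f)) / c w"
    by (simp add: sum_divide_distrib sum_negf sum_distrib_left sum.swap[of _ J])
  also have "\<dots> = 0" using assms(6) by simp
  finally show ?thesis .
qed

context wfg
begin

lemma gamma_par: "v \<in> vertices G \<Longrightarrow> gamma_adj G (par G v) (VS v 1)"
  unfolding gamma_adj_def by blast

lemma gamma_dw: "l \<in> leaves G \<Longrightarrow> gamma_adj G l (dw G l)"
  unfolding gamma_adj_def by blast

lemma gamma_corner: "v \<in> vertices G \<Longrightarrow> v < wp G v \<Longrightarrow> i \<in> {1..4} \<Longrightarrow>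
   gamma_adj G (VS v i) (VS (wp G v) (corner_perm (pc G v) i))"
  unfolding gamma_adj_def by blast

lemma fin_W: "finite (wavy_rows G)"
  using fin_vertices by (simp add: wavy_rows_def)

lemma W_sub: "wavy_rows G \<subseteq> vertices G"
  by (auto simp: wavy_rows_def)

lemma zero_notin_W: "0 \<notin> wavy_rows G"
  by (auto simp: wavy_rows_def vertices_def)

lemma card_W: "2 * card (wavy_rows G) \<le> gorder G"
proof -
  let ?W = "wavy_rows G"
  have inj: "inj_on (wp G) ?W"
    by (rule inj_on_inverseI[where g = "wp G"]) (use wp_props W_sub in auto)
  have disj: "?W \<inter> wp G ` ?W = {}"
  proof (rule ccontr)
    assume "?W \<inter> wp G ` ?W \<noteq> {}"
    then obtain w where w: "w \<in> ?W" "wp G w \<in> ?W" by blast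
    hence "w < wp G w" "wp G w < wp G (wp G w)" by (auto simp: wavy_rows_def)
    moreover have "wp G (wp G w) = w" using wp_props w W_sub by auto
    ultimately show False by simp
  qed
  have sub: "?W \<union> wp G ` ?W \<subseteq> vertices G" using W_sub wp_props by auto
  have "card (?W \<union> wp G ` ?W) = card ?W + card (wp G ` ?W)"
    using disj fin_W by (simp add: card_Un_disjoint)
  also have "card (wp G ` ?W) = card ?W" using inj by (rule card_image)
  finally have "2 * card ?W = card (?W \<union> wp G ` ?W)" by simp
  also have "\<dots> \<le> card (vertices G)" using sub fin_vertices by (rule card_mono[rotated])
  finally show ?thesis by (simp add: vertices_def)
qed

lemma rank_basis:
  "\<exists>I \<subseteq> wavy_rows G. card I = rankE G \<and> lin_indep_rows (Emat G) (faces G) I \<and>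
     (\<forall>w\<in>wavy_rows G - I. \<not> lin_indep_rows (Emat G) (faces G) (insert w I))"
proof -
  let ?S = "{card S | S. S \<subseteq> wavy_rows G \<and> lin_indep_rows (Emat G) (faces G) S}"
  have fin: "finite ?S"
  proof -
    have "?S \<subseteq> card ` Pow (wavy_rows G)" by auto
    thus ?thesis using fin_W finite_subset by blast
  qed
  have ne: "?S \<noteq> {}"
  proof -
    have "lin_indep_rows (Emat G) (faces G) {}" by (simp add: lin_indep_rows_def)
    thus ?thesis by blast
  qed
  have "Max ?S \<in> ?S" using fin ne by (rule Max_in)
  then obtain I where I: "I \<subseteq> wavy_rows G" "lin_indep_rows (Emat G) (faces G) I" "card I = rankE G"
    unfolding rankE_def mat_rank_def by auto
  have "\<forall>w\<in>wavy_rows G - I. \<not> lin_indep_rows (Emat G) (faces G) (insert w I)"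
  proof (intro ballI notI)
    fix w assume w: "w \<in> wavy_rows G - I" and ind: "lin_indep_rows (Emat G) (faces G) (insert w I)"
    have "insert w I \<subseteq> wavy_rows G" using w I by auto
    hence "card (insert w I) \<in> ?S" using ind by blast
    hence "card (insert w I) \<le> Max ?S" by (rule Max_ge[OF fin])
    moreover have "card (insert w I) = Suc (card I)"
      using w I(1) fin_W finite_subset by fastforce
    ultimately show False using I(3) unfolding rankE_def mat_rank_def by simp
  qed
  with I show ?thesis by blast
qed

definition Maug :: "nat \<Rightarrow> slot set \<Rightarrow> real" where
  "Maug i f = (if i = 0 then of_bool (f = froot) else Emat G i f)"

lemma Maug0: "(\<Sum>f\<in>faces G. Maug 0 f * m f) = m froot"
proof -
  have "(\<Sum>f\<in>faces G. Maug 0 f * m f) = (\<Sum>f\<in>faces G. if f = froot then m f else 0)"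
    by (intro sum.cong refl) (simp add: Maug_def)
  also have "\<dots> = m froot" using froot_face fin_faces by (simp add: sum.delta')
  finally show ?thesis .
qed

lemma aug_indep:
  assumes "I \<subseteq> wavy_rows G" "lin_indep_rows (Emat G) (faces G) I"
  shows "lin_indep_rows Maug (faces G) (insert 0 I)"
  unfolding lin_indep_rows_def
proof (intro allI impI)
  fix c assume h: "\<forall>f\<in>faces G. (\<Sum>v\<in>insert 0 I. c v * Maug v f) = 0"
  have I0: "0 \<notin> I" using assms(1) zero_notin_W by blast
  have finI: "finite I" using assms(1) fin_W finite_subset by blast
  have sp: "(\<Sum>v\<in>insert 0 I. c v * Maug v f) = c 0 * of_bool (f = froot) + (\<Sum>v\<in>I. c v * Emat G v f)" for f
  proof -
    have "(\<Sum>v\<in>I. c v * Maug v f) = (\<Sum>v\<in>I. c v * Emat G v f)"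
      using I0 by (intro sum.cong refl) (auto simp: Maug_def)
    thus ?thesis using I0 finI by (simp add: Maug_def)
  qed
  have "0 = (\<Sum>f\<in>faces G. (\<Sum>v\<in>insert 0 I. c v * Maug v f))" using h by simp
  also have "\<dots> = (\<Sum>f\<in>faces G. c 0 * of_bool (f = froot)) + (\<Sum>v\<in>I. c v * (\<Sum>f\<in>faces G. Emat G v f))"
    by (simp add: sp sum.distrib sum_distrib_left sum.swap[of _ "faces G"])
  also have "(\<Sum>v\<in>I. c v * (\<Sum>f\<in>faces G. Emat G v f)) = 0"
    using assms(1) W_sub by (intro sum.neutral) (auto simp: Emat_rowsum)
  also have "(\<Sum>f\<in>faces G. c 0 * of_bool (f = froot)) = c 0"
  proof -
    have "(\<Sum>f\<in>faces G. c 0 * of_bool (f = froot)) = (\<Sum>f\<in>faces G. if f = froot then c 0 else 0)"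
      by (intro sum.cong refl) simp
    thus ?thesis using froot_face fin_faces by (simp add: sum.delta')
  qed
  finally have c0: "c 0 = 0" by simp
  hence "\<forall>f\<in>faces G. (\<Sum>v\<in>I. c v * Emat G v f) = 0" using h sp by simp
  hence "\<forall>v\<in>I. c v = 0" using assms(2) unfolding lin_indep_rows_def by blast
  with c0 show "\<forall>v\<in>insert 0 I. c v = 0" by blast
qed

lemma vanish:
  fixes m :: "slot set \<Rightarrow> real"
  assumes E: "\<forall>w\<in>wavy_rows G. (\<Sum>f\<in>faces G. Emat G w f * m f) = 0"
    and r: "m froot = 0"
    and z: "\<forall>v\<in>wavy_rows G. m (cls (VS v 2)) = 0 \<and> m (cls (VS v 3)) = 0"
  shows "\<forall>s\<in>all_slots G. m (cls s) = 0"
proof -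
  have main: "x \<in> vertices G \<longrightarrow> (\<forall>i\<in>{1..4}. m (cls (VS x i)) = 0)" for x
  proof (induction x rule: less_induct)
    case (less x)
    show ?case
    proof (intro impI)
      assume xV: "x \<in> vertices G"
      have s1: "m (cls (VS x 1)) = 0"
      proof -
        have "cls (VS x 1) = cls (par G x)" using cls_adj[OF gamma_par[OF xV]] by simp
        moreover have "m (cls (par G x)) = 0"
        proof (rule child_slots_cases[OF par_child[OF xV]])
          fix b assume "par G x = RS b" thus ?thesis using r cls_RS by simp
        next
          fix u i assume "par G x = VS u i" "u \<in> vertices G" "i \<in> {2..4}"
          moreover have "u < x" using heap[OF xV] \<open>par G x = VS u i\<close> .
          ultimately show ?thesis using less.IH by auto
        qed
        ultimately show ?thesis by simp
      qed
      show "\<forall>i\<in>{1..4}. m (cls (VS x i)) = 0"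
      proof (cases "x \<in> wavy_rows G")
        case True
        have s23: "m (cls (VS x 2)) = 0" "m (cls (VS x 3)) = 0" using z True by auto
        have "m (cls (VS x 1)) + m (cls (VS x 2)) - m (cls (VS x 3)) - m (cls (VS x 4)) = 0"
          using E True Emat_sum[OF xV, of m] by simp
        hence s4: "m (cls (VS x 4)) = 0" using s1 s23 by simp
        have e: "{1..4::nat} = {1,2,3,4}" by auto
        show ?thesis using s1 s23 s4 unfolding e by simp
      next
        case False
        let ?x' = "wp G x"
        have props: "?x' \<in> vertices G" "?x' \<noteq> x" "wp G ?x' = x" using wp_props[OF xV] by auto
        have lt: "?x' < x" using False props xV by (auto simp: wavy_rows_def)
        have x'W: "?x' < wp G ?x'" using lt props by simp
        have IHx': "\<forall>i\<in>{1..4}. m (cls (VS ?x' i)) = 0" using less.IH[OF lt] props by blast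
        show ?thesis
        proof
          fix i :: nat assume i: "i \<in> {1..4}"
          obtain i0 where i0: "i0 \<in> {1..4}" "corner_perm (pc G ?x') i0 = i"
            using corner_surj[OF i] by blast
          have "gamma_adj G (VS ?x' i0) (VS (wp G ?x') (corner_perm (pc G ?x') i0))"
            by (rule gamma_corner[OF props(1) x'W i0(1)])
          hence "cls (VS ?x' i0) = cls (VS x i)" using props(3) i0(2) cls_adj by simp
          thus "m (cls (VS x i)) = 0" using IHx' i0(1) by metis
        qed
      qed
    qed
  qed
  show ?thesis
  proof
    fix s assume "s \<in> all_slots G"
    thus "m (cls s) = 0"
    proof (rule all_slots_cases)
      fix b assume "s = RS b" thus ?thesis using r cls_RS by simp
    next
      fix v i assume "s = VS v i" "v \<in> vertices G" "i \<in> {1..4}"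
      thus ?thesis using main by blast
    qed
  qed
qed

end

definition elim_inj :: "('r \<Rightarrow> 'c \<Rightarrow> real) \<Rightarrow> 'r set \<Rightarrow> 'c set \<Rightarrow> 'c set \<Rightarrow> bool" where
  "elim_inj M I J P \<longleftrightarrow> (\<forall>m m'. (\<forall>i\<in>I. (\<Sum>f\<in>J. M i f * m f) = (\<Sum>f\<in>J. M i f * m' f)) \<and> (\<forall>f\<in>J-P. m f = m' f)
       \<longrightarrow> (\<forall>f\<in>P. m f = m' f))"

definition elim_surj :: "('r \<Rightarrow> 'c \<Rightarrow> real) \<Rightarrow> 'r set \<Rightarrow> 'c set \<Rightarrow> 'c set \<Rightarrow> bool" where
  "elim_surj M I J P \<longleftrightarrow> (\<forall>x. \<exists>m. (\<forall>i\<in>I. (\<Sum>f\<in>J. M i f * m f) = 0) \<and> (\<forall>f\<in>J-P. m f = x f))"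

lemma elim_lemma':
  fixes M :: "'r \<Rightarrow> 'c \<Rightarrow> real"
  assumes "finite I" "finite J" "lin_indep_rows M J I"
  shows "\<exists>P. P \<subseteq> J \<and> card P = card I \<and> elim_inj M I J P \<and> elim_surj M I J P"
  unfolding elim_inj_def elim_surj_def by (rule elim_lemma[OF assms])

lemma ex_conj_drop: "\<exists>x. C x \<and> A x \<and> B x \<Longrightarrow> \<exists>x. C x \<and> A x"
  by blast

context wfg
begin

lemma Maug_I: "i \<noteq> 0 \<Longrightarrow> (\<Sum>f\<in>faces G. Maug i f * m f) = (\<Sum>f\<in>faces G. Emat G i f * m f)"
  by (simp add: Maug_def)

lemma aug_setup:
  "\<exists>I P. I \<subseteq> wavy_rows G \<and> card I = rankE G \<and> lin_indep_rows (Emat G) (faces G) I \<and>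
     (\<forall>w\<in>wavy_rows G - I. \<not> lin_indep_rows (Emat G) (faces G) (insert w I)) \<and>
     P \<subseteq> faces G \<and> card P = rankE G + 1 \<and>
     elim_inj Maug (insert 0 I) (faces G) P \<and> elim_surj Maug (insert 0 I) (faces G) P"
proof -
  obtain I where I: "I \<subseteq> wavy_rows G" "card I = rankE G" "lin_indep_rows (Emat G) (faces G) I"
     "\<forall>w\<in>wavy_rows G - I. \<not> lin_indep_rows (Emat G) (faces G) (insert w I)"
    using rank_basis by (elim exE conjE) (rule that; assumption)
  have finI: "finite I" using I(1) fin_W finite_subset by blast
  have I0: "0 \<notin> I" using I(1) zero_notin_W by blast
  have ind: "lin_indep_rows Maug (faces G) (insert 0 I)" using aug_indep I by blast
  have finI': "finite (insert 0 I)" using finI by simp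
  obtain P where P: "P \<subseteq> faces G" "card P = card (insert 0 I)"
    "elim_inj Maug (insert 0 I) (faces G) P" "elim_surj Maug (insert 0 I) (faces G) P"
    using elim_lemma'[OF finI' fin_faces ind] by (elim exE conjE) (rule that; assumption)
  have "card (insert 0 I) = rankE G + 1" using finI I0 I(2) by simp
  hence cP: "card P = rankE G + 1" using P(2) by simp
  show ?thesis
    apply (rule exI[of _ I], rule exI[of _ P])
    using I P(1) cP P(3) P(4) by (intro conjI)
qed

lemma kernel_from_aug:
  fixes m :: "slot set \<Rightarrow> real"
  assumes "I \<subseteq> wavy_rows G" "lin_indep_rows (Emat G) (faces G) I"
     "\<forall>w\<in>wavy_rows G - I. \<not> lin_indep_rows (Emat G) (faces G) (insert w I)"
     "\<forall>i\<in>insert 0 I. (\<Sum>f\<in>faces G. Maug i f * m f) = 0"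
  shows "m froot = 0" "\<forall>w\<in>wavy_rows G. (\<Sum>f\<in>faces G. Emat G w f * m f) = 0"
proof -
  have "(\<Sum>f\<in>faces G. Maug 0 f * m f) = 0" using assms(4) by simp
  thus "m froot = 0" by (simp add: Maug0)
  have I0: "0 \<notin> I" using assms(1) zero_notin_W by blast
  have k: "\<forall>i\<in>I. (\<Sum>f\<in>faces G. Emat G i f * m f) = 0"
  proof
    fix i assume i: "i \<in> I"
    have "i \<noteq> 0"
    proof
      assume "i = 0" with i I0 show False by simp
    qed
    hence "(\<Sum>f\<in>faces G. Emat G i f * m f) = (\<Sum>f\<in>faces G. Maug i f * m f)" by (simp add: Maug_I)
    also have "\<dots> = 0" using assms(4) i by simp
    finally show "(\<Sum>f\<in>faces G. Emat G i f * m f) = 0" .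
  qed
  show "\<forall>w\<in>wavy_rows G. (\<Sum>f\<in>faces G. Emat G w f * m f) = 0"
  proof
    fix w assume "w \<in> wavy_rows G"
    show "(\<Sum>f\<in>faces G. Emat G w f * m f) = 0"
      by (rule span_kernel[OF fin_faces fin_W assms(1-3) k \<open>w \<in> wavy_rows G\<close>])
  qed
qed

lemma degree_bounds:
  "rankE G + 1 \<le> card (faces G) \<and> card (faces G) \<le> gorder G + rankE G + 1"
proof -
  obtain I P where I: "I \<subseteq> wavy_rows G" "card I = rankE G" "lin_indep_rows (Emat G) (faces G) I"
     "\<forall>w\<in>wavy_rows G - I. \<not> lin_indep_rows (Emat G) (faces G) (insert w I)"
    and P: "P \<subseteq> faces G" "card P = rankE G + 1"
    and surj0: "elim_surj Maug (insert 0 I) (faces G) P"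
    using aug_setup by blast
  have surj: "\<forall>x. \<exists>m. (\<forall>i\<in>insert 0 I. (\<Sum>f\<in>faces G. Maug i f * m f) = 0) \<and> (\<forall>f\<in>faces G-P. m f = x f)"
    using surj0 unfolding elim_surj_def .
  have c1: "rankE G + 1 \<le> card (faces G)" using P card_mono[OF fin_faces] by metis
  define Q where "Q = faces G - P"
  have finQ: "finite Q" using fin_faces by (simp add: Q_def)
  have cardQ: "card Q = card (faces G) - (rankE G + 1)"
  proof -
    have "finite P" using P(1) fin_faces finite_subset by blast
    thus ?thesis using P by (simp add: Q_def card_Diff_subset)
  qed
  define b where "b q = (SOME m. (\<forall>i\<in>insert 0 I. (\<Sum>f\<in>faces G. Maug i f * m f) = 0) \<and>
        (\<forall>f\<in>Q. m f = (if f = q then 1 else 0)))" for q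
  have bprop: "(\<forall>i\<in>insert 0 I. (\<Sum>f\<in>faces G. Maug i f * b q f) = 0) \<and>
        (\<forall>f\<in>Q. b q f = (if f = q then 1 else 0))" for q
  proof -
    have ex: "\<exists>m. (\<forall>i\<in>insert 0 I. (\<Sum>f\<in>faces G. Maug i f * m f) = 0) \<and>
        (\<forall>f\<in>Q. m f = (if f = q then 1 else 0))"
      using spec[OF surj, of "\<lambda>f. if f = q then 1 else 0"] unfolding Q_def by simp
    show ?thesis unfolding b_def by (rule someI_ex[OF ex])
  qed
  have broot: "b q froot = 0" for q using kernel_from_aug(1)[OF I(1,3,4)] bprop by blast
  have bE: "\<forall>w\<in>wavy_rows G. (\<Sum>f\<in>faces G. Emat G w f * b q f) = 0" for q
    using kernel_from_aug(2)[OF I(1,3,4)] bprop by blast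
  define D where "D = (\<lambda>v. VS v 2) ` wavy_rows G \<union> (\<lambda>v. VS v 3) ` wavy_rows G"
  have finD: "finite D" using fin_W by (simp add: D_def)
  have cardD: "card D \<le> gorder G"
  proof -
    have "card D \<le> card ((\<lambda>v. VS v 2) ` wavy_rows G) + card ((\<lambda>v. VS v 3) ` wavy_rows G)"
      unfolding D_def by (rule card_Un_le)
    also have "\<dots> \<le> card (wavy_rows G) + card (wavy_rows G)"
      by (intro add_mono card_image_le fin_W)
    also have "\<dots> \<le> gorder G" using card_W by simp
    finally show ?thesis .
  qed
  define Nm where "Nm q s = b q (cls s)" for q s
  have indN: "lin_indep_rows Nm D Q"
    unfolding lin_indep_rows_def
  proof (intro allI impI)
    fix c assume hc: "\<forall>s\<in>D. (\<Sum>q\<in>Q. c q * Nm q s) = 0"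
    define m where "m f = (\<Sum>q\<in>Q. c q * b q f)" for f
    have mE: "\<forall>w\<in>wavy_rows G. (\<Sum>f\<in>faces G. Emat G w f * m f) = 0"
    proof
      fix w assume w: "w \<in> wavy_rows G"
      have "(\<Sum>f\<in>faces G. Emat G w f * m f) = (\<Sum>q\<in>Q. c q * (\<Sum>f\<in>faces G. Emat G w f * b q f))"
        unfolding m_def by (simp add: sum_distrib_left sum_distrib_right sum.swap[of _ "faces G"] mult.assoc mult.left_commute)
      also have "\<dots> = 0" using bE w by simp
      finally show "(\<Sum>f\<in>faces G. Emat G w f * m f) = 0" .
    qed
    have mr: "m froot = 0" by (simp add: m_def broot)
    have mz: "\<forall>v\<in>wavy_rows G. m (cls (VS v 2)) = 0 \<and> m (cls (VS v 3)) = 0"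
      using hc by (auto simp: D_def Nm_def m_def)
    have van: "\<forall>s\<in>all_slots G. m (cls s) = 0" by (rule vanish[OF mE mr mz])
    show "\<forall>q\<in>Q. c q = 0"
    proof
      fix q assume q: "q \<in> Q"
      hence "q \<in> faces G" by (simp add: Q_def)
      then obtain s where "s \<in> all_slots G" "q = cls s" by (auto simp: faces_eq)
      hence "m q = 0" using van by simp
      moreover have "m q = (\<Sum>q'\<in>Q. c q' * (if q = q' then 1 else 0))"
        unfolding m_def using bprop q by (intro sum.cong refl) auto
      moreover have "\<dots> = (\<Sum>q'\<in>Q. if q = q' then c q' else 0)" by (intro sum.cong) auto
      moreover have "\<dots> = c q" using q finQ by (simp add: sum.delta')
      ultimately show "c q = 0" by simp
    qed
  qed
  obtain P' where "P' \<subseteq> D" "card P' = card Q"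
    using elim_lemma'[OF finQ finD indN] by blast
  hence "card Q \<le> card D" using card_mono[OF finD] by metis
  hence "card Q \<le> gorder G" using cardD by simp
  thus ?thesis using c1 cardQ by simp
qed

lemma gdegree_nonneg: "gdegree G \<ge> 0"
  using degree_bounds by (simp add: gdegree_def nfaces_def)

end

lemma admD:
  assumes "(S, j, k) \<in> admissible G r"
  shows "\<forall>v. v \<notin> vertices G \<longrightarrow> S v = 0 \<and> j v = 0 \<and> k v = 0"
    "\<forall>v\<in>vertices G. j v \<le> S v \<and> k v \<le> S v"
    "\<forall>v\<in>vertices G. mom r (S, j, k) (par G v) = mom r (S, j, k) (VS v 1)"
    "\<forall>l\<in>leaves G. mom r (S, j, k) l = mom r (S, j, k) (dw G l)"
    "\<forall>v\<in>vertices G. v < wp G v \<longrightarrow>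
        S v = S (wp G v) \<and> propag (pc G v) (S v, j v, k v) (S (wp G v), j (wp G v), k (wp G v))"
  using assms unfolding admissible_def mem_Collect_eq prod.case by blast+

context wfg
begin

lemma adj_mom:
  assumes a: "(S, j, k) \<in> admissible G r" and g: "gamma_adj G s t"
  shows "mom r (S, j, k) s = mom r (S, j, k) t"
proof -
  note A = admD[OF a]
  have "(\<exists>v\<in>vertices G. {s, t} = {par G v, VS v 1}) \<or>
     (\<exists>l\<in>leaves G. {s, t} = {l, dw G l}) \<or>
     (\<exists>v\<in>vertices G. v < wp G v \<and>
        (\<exists>i\<in>{1..4}. {s, t} = {VS v i, VS (wp G v) (corner_perm (pc G v) i)})) \<or>
     {s, t} = {RS True, RS False}" using g unfolding gamma_adj_def .
  thus ?thesis
  proof (elim disjE bexE conjE)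
    fix v assume "v \<in> vertices G" "{s, t} = {par G v, VS v 1}"
    thus ?thesis using A(3) by (auto simp: doubleton_eq_iff)
  next
    fix l assume "l \<in> leaves G" "{s, t} = {l, dw G l}"
    thus ?thesis using A(4) by (auto simp: doubleton_eq_iff)
  next
    fix v i assume v: "v \<in> vertices G" "v < wp G v" and i: "i \<in> {1..4}"
      and e: "{s, t} = {VS v i, VS (wp G v) (corner_perm (pc G v) i)}"
    have w: "wp G v \<in> vertices G" using wp_props[OF v(1)] by simp
    have P1: "S v = S (wp G v) \<and> propag (pc G v) (S v, j v, k v) (S (wp G v), j (wp G v), k (wp G v))"
      using A(5) v by blast
    have b1: "j v \<le> S v \<and> k v \<le> S v" using A(2) v(1) by blast
    have b2: "j (wp G v) \<le> S (wp G v) \<and> k (wp G v) \<le> S (wp G v)" using A(2) w by blast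
    have "mom r (S, j, k) (VS v i) = mom r (S, j, k) (VS (wp G v) (corner_perm (pc G v) i))"
      by (rule corner_mom[OF conjunct2[OF P1] conjunct1[OF b1] conjunct2[OF b1] conjunct1[OF b2] conjunct2[OF b2] i])
    thus ?thesis using e by (auto simp: doubleton_eq_iff)
  next
    assume "{s, t} = {RS True, RS False}"
    thus ?thesis by (auto simp: doubleton_eq_iff)
  qed
qed

lemma grel_mom:
  assumes a: "(S, j, k) \<in> admissible G r" and g: "(s, t) \<in> grel"
  shows "mom r (S, j, k) s = mom r (S, j, k) t"
  using g unfolding grel_def
proof (induction rule: rtrancl_induct)
  case base thus ?case by simp
next
  case (step y z)
  thus ?case using adj_mom[OF a, of y z] by simp
qed

definition natmom :: "nat \<Rightarrow> attribution \<Rightarrow> slot set \<Rightarrow> nat" where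
  "natmom r a f = mom r a (SOME s. s \<in> all_slots G \<and> f = cls s)"

lemma natmom_cls:
  assumes a: "(S, j, k) \<in> admissible G r" and s: "s \<in> all_slots G"
  shows "natmom r (S, j, k) (cls s) = mom r (S, j, k) s"
proof -
  have ex: "\<exists>s'. s' \<in> all_slots G \<and> cls s = cls s'" using s by blast
  define s' where "s' = (SOME s'. s' \<in> all_slots G \<and> cls s = cls s')"
  have s': "s' \<in> all_slots G \<and> cls s = cls s'" unfolding s'_def by (rule someI_ex[OF ex])
  have "s' \<in> cls s" using s' in_cls by simp
  hence "(s, s') \<in> grel" by (simp add: cls_def)
  hence "mom r (S, j, k) s = mom r (S, j, k) s'" by (rule grel_mom[OF a])
  thus ?thesis by (simp add: natmom_def s'_def)
qed

lemma row0_adm: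
  assumes a: "(S, j, k) \<in> admissible G r"
  shows "(\<Sum>f\<in>faces G. Maug 0 f * real (natmom r (S, j, k) f)) = real r"
proof -
  have "natmom r (S, j, k) froot = r"
    unfolding froot_def using natmom_cls[OF a, of "RS True"] by (simp add: all_slots_def)
  thus ?thesis by (simp add: Maug0)
qed

lemma rowW_adm:
  assumes a: "(S, j, k) \<in> admissible G r" and w: "w \<in> wavy_rows G"
  shows "(\<Sum>f\<in>faces G. Emat G w f * real (natmom r (S, j, k) f)) = 0"
proof -
  have wV: "w \<in> vertices G" using w W_sub by auto
  have le: "j w \<le> S w" "k w \<le> S w" using admD(2)[OF a] wV by auto
  have "(\<Sum>f\<in>faces G. Emat G w f * real (natmom r (S, j, k) f)) =
     real (mom r (S, j, k) (VS w 1)) + real (mom r (S, j, k) (VS w 2))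
     - real (mom r (S, j, k) (VS w 3)) - real (mom r (S, j, k) (VS w 4))"
    using Emat_sum[OF wV, of "\<lambda>f. real (natmom r (S, j, k) f)"] natmom_cls[OF a] VS_all[OF wV]
    by simp
  also have "\<dots> = 0" using le by (simp add: of_nat_diff)
  finally show ?thesis .
qed

lemma adm_eq:
  assumes a: "(S, j, k) \<in> admissible G r" and b: "(S', j', k') \<in> admissible G r"
    and eq: "\<forall>v\<in>vertices G. \<forall>i\<in>{1..4}. mom r (S, j, k) (VS v i) = mom r (S', j', k') (VS v i)"
  shows "(S, j, k) = (S', j', k')"
proof -
  have "j v = j' v \<and> k v = k' v \<and> S v = S' v" for v
  proof (cases "v \<in> vertices G")
    case True
    have e1: "j v = j' v" using eq[rule_format, OF True, of 1] by simp
    have e3: "k v = k' v" using eq[rule_format, OF True, of 3] by simp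
    have e2: "S v - j v = S' v - j' v" using eq[rule_format, OF True, of 2] by simp
    have "j v \<le> S v" "j' v \<le> S' v" using admD(2)[OF a] admD(2)[OF b] True by auto
    thus ?thesis using e1 e2 e3 by simp
  next
    case False thus ?thesis using admD(1)[OF a] admD(1)[OF b] by simp
  qed
  thus ?thesis by auto
qed

end

context wfg
begin

lemma coerc:
  assumes a: "(S, j, k) \<in> admissible G r" and s: "s \<in> all_slots G"
  shows "mom r (S, j, k) s \<le> 2 ^ gorder G * (\<Sum>l\<in>leaves G. mom r (S, j, k) l)"
proof -
  define L where "L = (\<Sum>l\<in>leaves G. mom r (S, j, k) l)"
  define n where "n = gorder G"
  note A = admD[OF a]
  have bnd: "j v \<le> S v" "k v \<le> S v" if "v \<in> vertices G" for v using A(2) that by blast+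
  have parm: "mom r (S, j, k) (par G v) = j v" if "v \<in> vertices G" for v
    using A(3) that by simp
  have half: "mom r (S, j, k) t \<le> L" if t: "t \<in> child_slots G" "t \<notin> par G ` vertices G" for t
  proof (cases "slot_type G t")
    case True
    hence "t \<in> leaves G" using t by (simp add: leaves_def half_slots_def)
    thus ?thesis unfolding L_def by (rule member_le_sum[OF _ _ fin_leaves]) simp
  next
    case False
    hence "t \<in> antileaves G" using t by (simp add: antileaves_def half_slots_def)
    hence "t \<in> dw G ` leaves G" using dw_bij by (simp add: bij_betw_def)
    then obtain l where l0: "t = dw G l" "l \<in> leaves G" by (rule imageE)
    have l: "l \<in> leaves G" "dw G l = t" using l0 by simp_all
    have "mom r (S, j, k) t = mom r (S, j, k) l" using A(4) l by simp
    also have "\<dots> \<le> L" unfolding L_def by (rule member_le_sum[OF l(1) _ fin_leaves]) simp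
    finally show ?thesis .
  qed
  have vle: "v \<le> n" "1 \<le> v" if "v \<in> vertices G" for v using that by (auto simp: vertices_def n_def)
  have main: "mom r (S, j, k) (VS x i) \<le> 2 ^ (n - x) * L" if "x \<in> vertices G" "i \<in> {2..4}" for x i
    using that
  proof (induction x arbitrary: i rule: measure_induct_rule[of "\<lambda>x. n - x"])
    case (less x)
    have cs: "VS x i \<in> child_slots G" by (rule VS_child[OF less.prems])
    show ?case
    proof (cases "VS x i \<in> par G ` vertices G")
      case True
      then obtain y where y0: "VS x i = par G y" "y \<in> vertices G" by (rule imageE)
      have y: "y \<in> vertices G" "par G y = VS x i" using y0 by simp_all
      have xy: "x < y" using heap[OF y(1) y(2)] .
      have lt: "n - y < n - x" using xy vle[OF y(1)] by simp
      have "mom r (S, j, k) (VS x i) = j y" using parm[OF y(1)] y(2) by simp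
      also have "\<dots> \<le> S y" using bnd[OF y(1)] by simp
      also have "\<dots> = mom r (S, j, k) (VS y 3) + mom r (S, j, k) (VS y 4)" using bnd[OF y(1)] by simp
      also have "\<dots> \<le> 2 ^ (n - y) * L + 2 ^ (n - y) * L"
        by (intro add_mono less.IH[OF lt y(1)]) auto
      also have "\<dots> = 2 ^ Suc (n - y) * L" by simp
      also have "\<dots> \<le> 2 ^ (n - x) * L"
        by (intro mult_right_mono power_increasing) (use lt in auto)
      finally show ?thesis .
    next
      case False
      have "mom r (S, j, k) (VS x i) \<le> L" by (rule half[OF cs False])
      also have "\<dots> \<le> 2 ^ (n - x) * L" by simp
      finally show ?thesis .
    qed
  qed
  have child: "mom r (S, j, k) t \<le> 2 ^ n * L" if t: "t \<in> child_slots G" for t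
  proof (cases "t \<in> par G ` vertices G")
    case True
    then obtain y where y0: "t = par G y" "y \<in> vertices G" by (rule imageE)
    have y: "y \<in> vertices G" "par G y = t" using y0 by simp_all
    have "mom r (S, j, k) t = j y" using parm[OF y(1)] y(2) by simp
    also have "\<dots> \<le> S y" using bnd[OF y(1)] by simp
    also have "\<dots> = mom r (S, j, k) (VS y 3) + mom r (S, j, k) (VS y 4)" using bnd[OF y(1)] by simp
    also have "\<dots> \<le> 2 ^ (n - y) * L + 2 ^ (n - y) * L"
      by (intro add_mono main[OF y(1)]) auto
    also have "\<dots> = 2 ^ Suc (n - y) * L" by simp
    also have "\<dots> \<le> 2 ^ n * L"
      by (intro mult_right_mono power_increasing) (use vle[OF y(1)] in auto)
    finally show ?thesis .
  next
    case False
    have "mom r (S, j, k) t \<le> L" by (rule half[OF t False])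
    also have "\<dots> \<le> 2 ^ n * L" by simp
    finally show ?thesis .
  qed
  have "mom r (S, j, k) s \<le> 2 ^ n * L"
  proof (rule all_slots_cases[OF s])
    fix b assume "s = RS b" thus ?thesis using child[OF RS_child[of b]] by simp
  next
    fix v i assume vi: "s = VS v i" "v \<in> vertices G" "i \<in> {1..4}"
    show ?thesis
    proof (cases "i = 1")
      case True
      have "mom r (S, j, k) s = mom r (S, j, k) (par G v)" using vi True parm by simp
      also have "\<dots> \<le> 2 ^ n * L" by (rule child[OF par_child[OF vi(2)]])
      finally show ?thesis .
    next
      case False
      hence "i \<in> {2..4}" using vi by auto
      hence "mom r (S, j, k) s \<le> 2 ^ (n - v) * L" using main vi by simp
      also have "\<dots> \<le> 2 ^ n * L" by (intro mult_right_mono power_increasing) auto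
      finally show ?thesis .
    qed
  qed
  thus ?thesis by (simp add: L_def n_def)
qed

end

lemma bern:
  fixes x :: real
  assumes "0 \<le> x" "x \<le> 1"
  shows "1 - x ^ n \<le> real n * (1 - x)"
proof (induction n)
  case 0 thus ?case by simp
next
  case (Suc n)
  have "x ^ n \<le> 1" using assms by (simp add: power_le_one)
  hence "x ^ n * (1 - x) \<le> 1 - x" using assms by (simp add: mult_left_le_one_le)
  hence "1 - x ^ Suc n = (1 - x ^ n) + x ^ n * (1 - x)" by (simp add: algebra_simps)
  also have "\<dots> \<le> real n * (1 - x) + (1 - x)"
    using Suc \<open>x ^ n * (1 - x) \<le> 1 - x\<close> by linarith
  finally show ?case by (simp add: algebra_simps)
qed

lemma geom_le:
  fixes x :: real
  assumes "0 \<le> x" "x < 1"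
  shows "(\<Sum>t\<in>{..T}. x ^ t) \<le> 1 / (1 - x)"
proof -
  have "(\<Sum>t\<in>{..T}. x ^ t) = (\<Sum>t<Suc T. x ^ t)" by (simp add: lessThan_Suc_atMost)
  also have "\<dots> = (1 - x ^ Suc T) / (1 - x)"
  proof -
    have ne: "x \<noteq> 1" using assms by simp
    show ?thesis by (subst sum_gp_strict) (simp only: ne if_False)
  qed
  also have "\<dots> \<le> 1 / (1 - x)" using assms by (intro divide_right_mono) auto
  finally show ?thesis .
qed

lemma box_sum:
  fixes x :: real
  assumes "finite Q" "0 \<le> x" "x < 1"
  shows "(\<Sum>z\<in>PiE Q (\<lambda>_. {..T}). \<Prod>q\<in>Q. x ^ z q) \<le> (1 / (1 - x)) ^ card Q"
proof -
  have "(\<Sum>z\<in>PiE Q (\<lambda>_. {..T}). \<Prod>q\<in>Q. x ^ z q) = (\<Prod>q\<in>Q. \<Sum>t\<in>{..T}. x ^ t)"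
    using assms(1) by (subst prod_sum_PiE[where f = "\<lambda>_ t. x ^ t"]) auto
  also have "\<dots> \<le> (\<Prod>q\<in>Q. 1 / (1 - x))"
    by (intro prod_mono conjI sum_nonneg geom_le) (use assms in auto)
  also have "\<dots> = (1 / (1 - x)) ^ card Q" by simp
  finally show ?thesis .
qed

lemma count_bound:
  fixes x :: real and y :: "'a \<Rightarrow> 'q \<Rightarrow> nat"
  assumes "finite Q" "0 \<le> x" "x < 1" "inj_on y A" "\<And>a. a \<in> A \<Longrightarrow> y a \<in> extensional Q"
    "\<And>a. a \<in> A \<Longrightarrow> 0 \<le> w a \<and> w a \<le> (\<Prod>q\<in>Q. x ^ y a q)"
    "finite F" "F \<subseteq> A"
  shows "(\<Sum>a\<in>F. w a) \<le> (1 / (1 - x)) ^ card Q"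
proof -
  define T where "T = (\<Sum>a\<in>F. \<Sum>q\<in>Q. y a q)"
  have yle: "y a q \<le> T" if "a \<in> F" "q \<in> Q" for a q
  proof -
    have "y a q \<le> (\<Sum>q\<in>Q. y a q)" by (rule member_le_sum[OF that(2) _ assms(1)]) simp
    also have "\<dots> \<le> T" unfolding T_def by (rule member_le_sum[OF that(1) _ assms(7)]) simp
    finally show ?thesis .
  qed
  have sub: "y ` F \<subseteq> PiE Q (\<lambda>_. {..T})"
  proof
    fix z assume "z \<in> y ` F"
    then obtain a where a: "a \<in> F" "z = y a" by blast
    have "y a \<in> extensional Q" using assms(5) a assms(8) by blast
    thus "z \<in> PiE Q (\<lambda>_. {..T})" using a yle by (auto simp: PiE_def Pi_def)
  qed
  have "(\<Sum>a\<in>F. w a) \<le> (\<Sum>a\<in>F. \<Prod>q\<in>Q. x ^ y a q)"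
    by (intro sum_mono) (use assms(6,8) in blast)
  also have "\<dots> = (\<Sum>z\<in>y ` F. \<Prod>q\<in>Q. x ^ z q)"
    using inj_on_subset[OF assms(4,8)] by (simp add: sum.reindex)
  also have "\<dots> \<le> (\<Sum>z\<in>PiE Q (\<lambda>_. {..T}). \<Prod>q\<in>Q. x ^ z q)"
    by (intro sum_mono2 finite_PiE sub prod_nonneg zero_le_power) (use assms in auto)
  also have "\<dots> \<le> (1 / (1 - x)) ^ card Q" by (rule box_sum[OF assms(1-3)])
  finally show ?thesis .
qed

context wfg
begin

lemma amp_bound:
  "\<exists>C :: real. \<forall>p :: real. 0 < p \<and> p < 1 \<longrightarrow>
     amplitude p r G \<le> ennreal (C * NN p powr (- real_of_int (gdegree G)))"
proof -
  obtain I P where I: "I \<subseteq> wavy_rows G" "card I = rankE G"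
    and P: "P \<subseteq> faces G" "card P = rankE G + 1"
    and einj: "elim_inj Maug (insert 0 I) (faces G) P"
    using aug_setup by blast
  have injP: "\<And>m m'. (\<forall>i\<in>insert 0 I. (\<Sum>f\<in>faces G. Maug i f * m f) = (\<Sum>f\<in>faces G. Maug i f * m' f)) \<Longrightarrow>
      (\<forall>f\<in>faces G - P. m f = m' f) \<Longrightarrow> (\<forall>f\<in>P. m f = m' f)"
    using einj unfolding elim_inj_def by blast
  have I0: "0 \<notin> I" using I(1) zero_notin_W by blast
  define Q where "Q = faces G - P"
  define kk where "kk = card Q"
  have finQ: "finite Q" using fin_faces by (simp add: Q_def)
  have finP: "finite P" using P(1) fin_faces finite_subset by blast
  have kk_eq: "kk = card (faces G) - (rankE G + 1)"
    using P finP by (simp add: kk_def Q_def card_Diff_subset)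
  have RF: "rankE G + 1 \<le> card (faces G)" using P card_mono[OF fin_faces] by metis
  define K :: nat where "K = 2 ^ gorder G"
  define c :: nat where "c = kk * K + 1"
  have cpos: "0 < c" by (simp add: c_def)
  define A where "A = admissible G r"
  define y where "y a = restrict (\<lambda>q. natmom r a q) Q" for a
  define L where "L a = (\<Sum>l\<in>leaves G. mom r a l)" for a
  have yinj: "inj_on y A"
  proof (rule inj_onI)
    fix a b assume a: "a \<in> A" and b: "b \<in> A" and yab: "y a = y b"
    obtain S j k where aa: "a = (S, j, k)" using prod_cases3 by blast
    obtain S' j' k' where bb: "b = (S', j', k')" using prod_cases3 by blast
    have aA: "(S, j, k) \<in> admissible G r" using a aa A_def by simp
    have bA: "(S', j', k') \<in> admissible G r" using b bb A_def by simp
    define m where "m f = real (natmom r (S, j, k) f)" for f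
    define m' where "m' f = real (natmom r (S', j', k') f)" for f
    have rows: "\<forall>i\<in>insert 0 I. (\<Sum>f\<in>faces G. Maug i f * m f) = (\<Sum>f\<in>faces G. Maug i f * m' f)"
    proof
      fix i assume i: "i \<in> insert 0 I"
      show "(\<Sum>f\<in>faces G. Maug i f * m f) = (\<Sum>f\<in>faces G. Maug i f * m' f)"
      proof (cases "i = 0")
        case True
        thus ?thesis using row0_adm[OF aA] row0_adm[OF bA] by (simp add: m_def m'_def)
      next
        case False
        hence iW: "i \<in> wavy_rows G" using i I(1) by auto
        show ?thesis using False rowW_adm[OF aA iW] rowW_adm[OF bA iW]
          by (simp add: m_def m'_def Maug_I)
      qed
    qed
    have onQ: "\<forall>f\<in>faces G - P. m f = m' f"
    proof
      fix f assume "f \<in> faces G - P"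
      hence "f \<in> Q" by (simp add: Q_def)
      hence "y a f = y b f" using yab by simp
      thus "m f = m' f" using \<open>f \<in> Q\<close> by (simp add: y_def m_def m'_def aa bb)
    qed
    have onP: "\<forall>f\<in>P. m f = m' f" by (rule injP[OF rows onQ])
    have allf: "m f = m' f" if "f \<in> faces G" for f using onP onQ that by blast
    have "\<forall>v\<in>vertices G. \<forall>i\<in>{1..4}. mom r (S, j, k) (VS v i) = mom r (S', j', k') (VS v i)"
    proof (intro ballI)
      fix v i assume v: "v \<in> vertices G" and i: "i \<in> {1..4::nat}"
      have s: "VS v i \<in> all_slots G" by (rule VS_all[OF v i])
      have "m (cls (VS v i)) = m' (cls (VS v i))" by (rule allf[OF cls_face[OF s]])
      thus "mom r (S, j, k) (VS v i) = mom r (S', j', k') (VS v i)"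
        using natmom_cls[OF aA s] natmom_cls[OF bA s] by (simp add: m_def m'_def)
    qed
    hence "(S, j, k) = (S', j', k')" by (rule adm_eq[OF aA bA])
    thus "a = b" using aa bb by simp
  qed
  have yext: "y a \<in> extensional Q" for a by (simp add: y_def)
  have ysum: "(\<Sum>q\<in>Q. y a q) \<le> kk * K * L a" if a: "a \<in> A" for a
  proof -
    obtain S j k where aa: "a = (S, j, k)" using prod_cases3 by blast
    have aA: "(S, j, k) \<in> admissible G r" using a aa A_def by simp
    have "y a q \<le> K * L a" if q: "q \<in> Q" for q
    proof -
      have "q \<in> faces G" using q by (simp add: Q_def)
      then obtain s where s: "s \<in> all_slots G" "q = cls s" by (auto simp: faces_eq)
      have "y a q = mom r (S, j, k) s" using q s natmom_cls[OF aA s(1)] by (simp add: y_def aa)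
      also have "\<dots> \<le> K * L a" using coerc[OF aA s(1)] by (simp add: K_def L_def aa)
      finally show ?thesis .
    qed
    hence "(\<Sum>q\<in>Q. y a q) \<le> of_nat (card Q) * (K * L a)" by (intro sum_bounded_above)
    thus ?thesis by (simp add: kk_def mult.assoc)
  qed
  define C :: real where "C = real c ^ kk"
  show ?thesis
  proof (rule exI[of _ C], intro allI impI)
    fix p :: real assume p: "0 < p \<and> p < 1"
    define x where "x = p powr (1 / real c)"
    have xpos: "0 < x" using p by (simp add: x_def)
    have xc: "x ^ c = p"
    proof -
      have "x ^ c = x powr real c" using xpos by (simp add: powr_realpow)
      also have "\<dots> = p powr (1 / real c * real c)" by (simp add: x_def powr_powr)
      also have "\<dots> = p" using cpos p by simp
      finally show ?thesis .
    qed
    have xlt: "x < 1"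
    proof (rule ccontr)
      assume "\<not> x < 1"
      hence "1 \<le> x ^ c" by (simp add: one_le_power)
      thus False using xc p by simp
    qed
    have NNp: "NN p = 1 / (1 - p)" by (simp add: NN_def)
    have NNpos: "0 < NN p" using p by (simp add: NNp)
    have onex: "1 / (1 - x) \<le> real c * NN p"
    proof -
      have "1 - p \<le> real c * (1 - x)" using bern[of x c] xpos xlt xc by simp
      thus ?thesis using p xlt by (simp add: NNp field_simps)
    qed
    define w where "w a = (\<Prod>l\<in>leaves G. p ^ mom r a l)" for a
    have wb: "0 \<le> w a \<and> w a \<le> (\<Prod>q\<in>Q. x ^ y a q)" if a: "a \<in> A" for a
    proof
      show "0 \<le> w a" using p by (simp add: w_def prod_nonneg)
      have wL: "w a = p ^ L a" by (simp add: w_def L_def power_sum)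
      define s where "s = (\<Sum>q\<in>Q. y a q)"
      have "(\<Prod>q\<in>Q. x ^ y a q) = x ^ s" by (simp add: s_def power_sum)
      also have "\<dots> = x powr real s" using xpos by (simp add: powr_realpow)
      also have "\<dots> = p powr (real s / real c)" by (simp add: x_def powr_powr)
      finally have e: "(\<Prod>q\<in>Q. x ^ y a q) = p powr (real s / real c)" .
      have "s \<le> kk * K * L a" using ysum[OF a] by (simp add: s_def)
      also have "\<dots> \<le> c * L a" by (simp add: c_def)
      finally have "real s \<le> real c * real (L a)" by (simp flip: of_nat_mult)
      hence le: "real s / real c \<le> real (L a)" using cpos by (simp add: divide_le_eq mult.commute)
      have "w a = p powr real (L a)" using wL p by (simp add: powr_realpow)
      also have "\<dots> \<le> p powr (real s / real c)" by (rule powr_mono'[OF le]) (use p in auto)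
      finally show "w a \<le> (\<Prod>q\<in>Q. x ^ y a q)" using e by simp
    qed
    define B where "B = (1 / (1 - x)) ^ kk"
    have fin_sums: "(\<Sum>a\<in>F. w a) \<le> B" if "finite F" "F \<subseteq> A" for F
      unfolding B_def kk_def
      by (rule count_bound[OF finQ _ xlt yinj yext wb that]) (use xpos in auto)
    have inf: "(\<Sum>\<^sub>\<infinity>a\<in>A. ennreal (w a)) \<le> ennreal B"
    proof (rule infsum_le_finite_sums)
      show "(\<lambda>a. ennreal (w a)) summable_on A" by (rule nonneg_summable_on_complete) simp
    next
      fix F assume F: "finite F" "F \<subseteq> A"
      have "(\<Sum>a\<in>F. ennreal (w a)) = ennreal (\<Sum>a\<in>F. w a)"
        using wb F by (intro sum_ennreal) auto
      also have "\<dots> \<le> ennreal B" by (rule ennreal_leI[OF fin_sums[OF F]])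
      finally show "(\<Sum>a\<in>F. ennreal (w a)) \<le> ennreal B" .
    qed
    have B_le: "B \<le> (real c * NN p) ^ kk"
      unfolding B_def by (rule power_mono[OF onex]) (use xlt in simp)
    have deg: "real_of_int (gdegree G) = real (gorder G) - real kk"
      using kk_eq RF by (simp add: gdegree_def nfaces_def of_nat_diff)
    have "amplitude p r G = ennreal (NN p powr (- real (gorder G))) * (\<Sum>\<^sub>\<infinity>a\<in>A. ennreal (w a))"
      by (simp add: amplitude_def A_def w_def)
    also have "\<dots> \<le> ennreal (NN p powr (- real (gorder G))) * ennreal ((real c * NN p) ^ kk)"
      by (intro mult_left_mono order.trans[OF inf] ennreal_leI B_le) simp
    also have "\<dots> = ennreal (NN p powr (- real (gorder G)) * (real c * NN p) ^ kk)"
      by (rule ennreal_mult[symmetric]) (use NNpos in auto)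
    also have "NN p powr (- real (gorder G)) * (real c * NN p) ^ kk = C * NN p powr (- real_of_int (gdegree G))"
    proof -
      have "NN p ^ kk = NN p powr real kk" using NNpos by (simp add: powr_realpow)
      hence "NN p powr (- real (gorder G)) * (real c * NN p) ^ kk
          = real c ^ kk * (NN p powr (- real (gorder G)) * NN p powr real kk)"
        by (simp add: power_mult_distrib)
      also have "\<dots> = real c ^ kk * NN p powr (real kk - real (gorder G))"
        by (simp add: powr_add[symmetric])
      finally show ?thesis by (simp add: C_def deg)
    qed
    finally show "amplitude p r G \<le> ennreal (C * NN p powr (- real_of_int (gdegree G)))" .
  qed
qed

end

theorem proposition1:
  fixes G :: graph and r :: nat
  assumes "wf_graph G"
  shows "gdegree G \<ge> 0 \<and>
         (\<exists>C :: real. \<forall>p :: real. 0 < p \<and> p < 1 \<longrightarrow>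
            amplitude p r G \<le> ennreal (C * NN p powr (- real_of_int (gdegree G))))"
proof -
  interpret wfg G using assms by unfold_locales
  show ?thesis by (intro conjI gdegree_nonneg amp_bound)
qed

end
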